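(* Let $P_x$ be a category of partitions. Then: (1) if $p\in P_x(k,l)$ then $\bar p\in P_x(0,k+l)$; (2) if $p\in P_x$ has a block with $s$ elements, then $1_s\in P_x(0,s)$ or $\uparrow\otimes 1_s\in P_x(0,s+1)$; (3) if $p\in P(k,l)$ is such that for every block $b$ of $p$ one has $1_{|b|}\in P_x(0,|b|)$, then $p\in P_x(k,l)$.
   Context: For integers $k,l\ge0$, $P(k,l)$ is the set of partitions (decompositions into disjoint nonempty blocks) of a set consisting of $k$ upper points labelled $1,\dots,k$ and $l$ lower points labelled $1,\dots,l$, pictured with the upper points on a top row and the lower points on a bottom row. Tensor product: for $p\in P(k,l)$, $q\in P(k',l')$, $p\otimes q\in P(k+k',l+l')$ is obtained by placing $q$ to the right of $p$. Composition: for $p\in P(m,l)$ and $q\in P(k,m)$, $pq\in P(k,l)$ is obtained by placing $q$ above $p$, identifying the $m$ lower points of $q$ with the $m$ upper points of $p$, merging blocks connected through these middle points, and then deleting the middle points together with all blocks consisting only of middle points. Involution: $p^*\in P(l,k)$ is the upside-down reflection of $p\in P(k,l)$. Special partitions: $|\in P(1,1)$ (one block containing the upper and the lower point); the basic crossing in $P(2,2)$, with blocks $\{\text{upper }1,\text{lower }2\}$ and $\{\text{upper }2,\text{lower }1\}$; $\sqcap\in P(0,2)$ (one block containing both lower points); $\uparrow\in P(0,1)$ (the singleton). A category of partitions is a family of subsets $P_x(k,l)\subset P(k,l)$ ($k,l\ge0$) stable under tensor product, composition (whenever defined) and involution, and containing $|$, the basic crossing and $\sqcap$. For $s\ge1$,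 $1_s\in P(0,s)$ denotes the one-block partition of $s$ lower points. For $p\in P(k,l)$, $\bar p\in P(0,k+l)$ is obtained by rotating the upper points counterclockwise down to the bottom row: its lower points $1,\dots,k$ are the former upper points $k,k-1,\dots,1$ and its lower points $k+1,\dots,k+l$ are the former lower points $1,\dots,l$, the block structure being unchanged. *)

theory Defs
  imports Main "HOL-Library.Disjoint_Sets"
begin

datatype pt = Up nat | Lo nat

definition pts :: "nat \<Rightarrow> nat \<Rightarrow> pt set" where
  "pts k l = Up ` {1..k} \<union> Lo ` {1..l}"

definition P :: "nat \<Rightarrow> nat \<Rightarrow> pt set set set" where
  "P k l = {B. partition_on (pts k l) B}"

definition shift_pt :: "nat \<Rightarrow> nat \<Rightarrow> pt \<Rightarrow> pt" where
  "shift_pt k l x = (case x of Up i \<Rightarrow> Up (i + k) | Lo j \<Rightarrow> Lo (j + l))"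

definition tensor :: "nat \<Rightarrow> nat \<Rightarrow> pt set set \<Rightarrow> pt set set \<Rightarrow> pt set set" where
  "tensor k l p q = p \<union> (\<lambda>b. shift_pt k l ` b) ` q"

definition swap_pt :: "pt \<Rightarrow> pt" where
  "swap_pt x = (case x of Up i \<Rightarrow> Lo i | Lo j \<Rightarrow> Up j)"

definition invol :: "pt set set \<Rightarrow> pt set set" where
  "invol p = (\<lambda>b. swap_pt ` b) ` p"

text \<open>Composition p q (q placed above p): points of the three rows.\<close>
datatype cpt = CU nat | CM nat | CL nat

definition liftq :: "pt \<Rightarrow> cpt" where
  "liftq x = (case x of Up i \<Rightarrow> CU i | Lo j \<Rightarrow> CM j)"

definition liftp :: "pt \<Rightarrow> cpt" where
  "liftp x = (case x of Up i \<Rightarrow> CM i | Lo j \<Rightarrow> CL j)"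

definition is_mid :: "cpt \<Rightarrow> bool" where
  "is_mid x = (case x of CM _ \<Rightarrow> True | _ \<Rightarrow> False)"

definition unlift :: "cpt \<Rightarrow> pt" where
  "unlift x = (case x of CU i \<Rightarrow> Up i | CM i \<Rightarrow> Up i | CL j \<Rightarrow> Lo j)"

definition comp_edges :: "pt set set \<Rightarrow> pt set set \<Rightarrow> (cpt \<times> cpt) set" where
  "comp_edges p q =
     {(x, y). \<exists>b\<in>q. x \<in> liftq ` b \<and> y \<in> liftq ` b} \<union>
     {(x, y). \<exists>b\<in>p. x \<in> liftp ` b \<and> y \<in> liftp ` b}"

definition comp :: "pt set set \<Rightarrow> pt set set \<Rightarrow> pt set set" where
  "comp p q =
     {unlift ` {y. (x, y) \<in> (comp_edges p q)\<^sup>* \<and> \<not> is_mid y} | x.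
        x \<in> (\<Union>b\<in>q. liftq ` b) \<union> (\<Union>b\<in>p. liftp ` b) \<and> \<not> is_mid x}"

definition idp :: "pt set set" where "idp = {{Up 1, Lo 1}}"
definition crossp :: "pt set set" where "crossp = {{Up 1, Lo 2}, {Up 2, Lo 1}}"
definition pairp :: "pt set set" where "pairp = {{Lo 1, Lo 2}}"
definition singp :: "pt set set" where "singp = {{Lo 1}}"
definition one_block :: "nat \<Rightarrow> pt set set" where "one_block s = {Lo ` {1..s}}"

definition rot_pt :: "nat \<Rightarrow> pt \<Rightarrow> pt" where
  "rot_pt k x = (case x of Up i \<Rightarrow> Lo (k + 1 - i) | Lo j \<Rightarrow> Lo (k + j))"

definition bar_part :: "nat \<Rightarrow> pt set set \<Rightarrow> pt set set" where
  "bar_part k p = (\<lambda>b. rot_pt k ` b) ` p"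

definition is_category :: "(nat \<Rightarrow> nat \<Rightarrow> pt set set set) \<Rightarrow> bool" where
  "is_category Px \<longleftrightarrow>
     (\<forall>k l. Px k l \<subseteq> P k l) \<and>
     (\<forall>k l k' l' p q. p \<in> Px k l \<longrightarrow> q \<in> Px k' l' \<longrightarrow> tensor k l p q \<in> Px (k + k') (l + l')) \<and>
     (\<forall>k m l p q. p \<in> Px m l \<longrightarrow> q \<in> Px k m \<longrightarrow> comp p q \<in> Px k l) \<and>
     (\<forall>k l p. p \<in> Px k l \<longrightarrow> invol p \<in> Px l k) \<and>
     idp \<in> Px 1 1 \<and> crossp \<in> Px 2 2 \<and> pairp \<in> Px 0 2"

end

theory Submission
  imports Defs "HOL-Combinatorics.Permutations"
begin


definition img :: "(pt \<Rightarrow> pt) \<Rightarrow> pt set set \<Rightarrow> pt set set" where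
  "img f p = (\<lambda>b. f ` b) ` p"

lemma img_comp: "img f (img g p) = img (f \<circ> g) p"
  by (auto simp: img_def image_image image_comp)

lemma img_cong: "(\<And>x. x \<in> \<Union>p \<Longrightarrow> f x = g x) \<Longrightarrow> img f p = img g p"
  unfolding img_def by (rule image_cong) (auto intro!: image_cong)

lemma img_id: "img id p = p" by (simp add: img_def)

lemma [simp]: "liftq (Up i) = CU i" "liftq (Lo j) = CM j"
  "liftp (Up i) = CM i" "liftp (Lo j) = CL j"
  "unlift (CU i) = Up i" "unlift (CM i) = Up i" "unlift (CL j) = Lo j"
  "is_mid (CM i)" "\<not> is_mid (CU i)" "\<not> is_mid (CL i)"
  "shift_pt k l (Up i) = Up (i + k)" "shift_pt k l (Lo j) = Lo (j + l)"
  "swap_pt (Up i) = Lo i" "swap_pt (Lo j) = Up j"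
  by (simp_all add: liftq_def liftp_def unlift_def is_mid_def shift_pt_def swap_pt_def)

lemma inj_liftq: "inj liftq" by (auto simp: inj_def liftq_def split: pt.splits)
lemma inj_liftp: "inj liftp" by (auto simp: inj_def liftp_def split: pt.splits)

lemma P_D:
  assumes "p \<in> P k l"
  shows "\<Union>p = pts k l" "\<And>b c x. b \<in> p \<Longrightarrow> c \<in> p \<Longrightarrow> x \<in> b \<Longrightarrow> x \<in> c \<Longrightarrow> b = c"
    "{} \<notin> p"
  using assms unfolding P_def partition_on_def disjoint_def by auto

lemma P_cover: "p \<in> P k l \<Longrightarrow> x \<in> pts k l \<Longrightarrow> \<exists>c\<in>p. x \<in> c"
  using P_D(1) by blast

lemma P_sub: "p \<in> P k l \<Longrightarrow> c \<in> p \<Longrightarrow> c \<subseteq> pts k l"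
  using P_D(1) by blast

lemma pts_Up[simp]: "Up i \<in> pts k l \<longleftrightarrow> 1 \<le> i \<and> i \<le> k"
  and pts_Lo[simp]: "Lo j \<in> pts k l \<longleftrightarrow> 1 \<le> j \<and> j \<le> l"
  by (auto simp: pts_def)

lemma finite_pts[simp]: "finite (pts k l)" by (simp add: pts_def)

lemma card_pts: "card (pts k l) = k + l"
proof -
  have "card (Up ` {1..k} \<union> Lo ` {1..l}) = card (Up ` {1..k}) + card (Lo ` {1..l})"
    by (rule card_Un_disjoint) auto
  also have "\<dots> = k + l" by (simp add: card_image inj_on_def)
  finally show ?thesis by (simp add: pts_def)
qed

lemma edges_sym: "(x, y) \<in> comp_edges p q \<Longrightarrow> (y, x) \<in> comp_edges p q"
  unfolding comp_edges_def by blast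

lemma rtr_sym: "(x, y) \<in> (comp_edges p q)\<^sup>* \<Longrightarrow> (y, x) \<in> (comp_edges p q)\<^sup>*"
proof (induction rule: rtrancl_induct)
  case base then show ?case by simp
next
  case (step y z) then show ?case
    by (meson converse_rtrancl_into_rtrancl edges_sym)
qed

lemma closed_rtr:
  assumes "x \<in> S" "\<And>y z. y \<in> S \<Longrightarrow> (y, z) \<in> E \<Longrightarrow> z \<in> S" "(x, y) \<in> E\<^sup>*"
  shows "y \<in> S"
  using assms(3,1) by (induction rule: rtrancl_induct) (auto intro: assms(2))

lemma hub_conn:
  assumes "H \<subseteq> S" "\<And>h h'. h \<in> H \<Longrightarrow> h' \<in> H \<Longrightarrow> (h, h') \<in> comp_edges p q"
    "\<And>y. y \<in> S \<Longrightarrow> \<exists>h\<in>H. (y, h) \<in> (comp_edges p q)\<^sup>*"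
    "y \<in> S" "z \<in> S"
  shows "(y, z) \<in> (comp_edges p q)\<^sup>*"
proof -
  obtain h where h: "h \<in> H" "(y, h) \<in> (comp_edges p q)\<^sup>*" using assms(3,4) by blast
  obtain h' where h': "h' \<in> H" "(z, h') \<in> (comp_edges p q)\<^sup>*" using assms(3,5) by blast
  have "(h, h') \<in> (comp_edges p q)\<^sup>*" using assms(2) h h' by blast
  moreover have "(h', z) \<in> (comp_edges p q)\<^sup>*" using rtr_sym h'(2) by blast
  ultimately show ?thesis using h(2) by (meson rtrancl_trans)
qed

definition V :: "pt set set \<Rightarrow> pt set set \<Rightarrow> cpt set" where
  "V p q = (\<Union>b\<in>q. liftq ` b) \<union> (\<Union>b\<in>p. liftp ` b)"

lemma comp_components:
  assumes closed: "\<And>c y z. c \<in> I \<Longrightarrow> y \<in> S c \<Longrightarrow> (y, z) \<in> comp_edges p q \<Longrightarrow> z \<in> S c"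
    and conn: "\<And>c y z. c \<in> I \<Longrightarrow> y \<in> S c \<Longrightarrow> z \<in> S c \<Longrightarrow> \<not> is_mid y \<Longrightarrow> \<not> is_mid z
         \<Longrightarrow> (y, z) \<in> (comp_edges p q)\<^sup>*"
    and cover: "\<And>x. x \<in> V p q \<Longrightarrow> \<not> is_mid x \<Longrightarrow> \<exists>c\<in>I. x \<in> S c"
    and nonempty: "\<And>c. c \<in> I \<Longrightarrow> \<exists>x. x \<in> V p q \<and> \<not> is_mid x \<and> x \<in> S c"
  shows "comp p q = (\<lambda>c. unlift ` {y \<in> S c. \<not> is_mid y}) ` I"
proof -
  have key: "{y. (x, y) \<in> (comp_edges p q)\<^sup>* \<and> \<not> is_mid y} = {y \<in> S c. \<not> is_mid y}"
    if "c \<in> I" "x \<in> S c" "\<not> is_mid x" for c x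
  proof
    show "{y. (x, y) \<in> (comp_edges p q)\<^sup>* \<and> \<not> is_mid y} \<subseteq> {y \<in> S c. \<not> is_mid y}"
      using closed_rtr[of x "S c" "comp_edges p q"] closed that by blast
    show "{y \<in> S c. \<not> is_mid y} \<subseteq> {y. (x, y) \<in> (comp_edges p q)\<^sup>* \<and> \<not> is_mid y}"
      using conn that by blast
  qed
  show ?thesis
    unfolding comp_def
  proof (intro equalityI subsetI)
    fix B assume "B \<in> {unlift ` {y. (x, y) \<in> (comp_edges p q)\<^sup>* \<and> \<not> is_mid y} | x.
        x \<in> (\<Union>b\<in>q. liftq ` b) \<union> (\<Union>b\<in>p. liftp ` b) \<and> \<not> is_mid x}"
    then obtain x where x: "x \<in> V p q" "\<not> is_mid x"
      "B = unlift ` {y. (x, y) \<in> (comp_edges p q)\<^sup>* \<and> \<not> is_mid y}"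
      unfolding V_def by blast
    obtain c where c: "c \<in> I" "x \<in> S c" using cover x by blast
    show "B \<in> (\<lambda>c. unlift ` {y \<in> S c. \<not> is_mid y}) ` I"
      using key[OF c x(2)] x(3) c(1) by blast
  next
    fix B assume "B \<in> (\<lambda>c. unlift ` {y \<in> S c. \<not> is_mid y}) ` I"
    then obtain c where c: "c \<in> I" "B = unlift ` {y \<in> S c. \<not> is_mid y}" by blast
    obtain x where x: "x \<in> V p q" "\<not> is_mid x" "x \<in> S c" using nonempty c by blast
    show "B \<in> {unlift ` {y. (x, y) \<in> (comp_edges p q)\<^sup>* \<and> \<not> is_mid y} | x.
        x \<in> (\<Union>b\<in>q. liftq ` b) \<union> (\<Union>b\<in>p. liftp ` b) \<and> \<not> is_mid x}"
      apply (rule CollectI)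
      apply (rule exI[of _ x])
      using key[OF c(1) x(3) x(2)] c(2) x(1,2) unfolding V_def by simp
  qed
qed



lemma liftp_CL: "liftp x = CL j \<longleftrightarrow> x = Lo j" by (cases x) auto
lemma liftp_CM: "liftp x = CM j \<longleftrightarrow> x = Up j" by (cases x) auto
lemma liftp_CU: "liftp x \<noteq> CU j" by (cases x) auto
lemma liftq_CU: "liftq x = CU j \<longleftrightarrow> x = Up j" by (cases x) auto
lemma liftq_CM: "liftq x = CM j \<longleftrightarrow> x = Lo j" by (cases x) auto
lemma liftq_CL: "liftq x \<noteq> CL j" by (cases x) auto
lemma liftp_CL': "CL j = liftp x \<longleftrightarrow> x = Lo j" by (cases x) auto
lemma liftp_CM': "CM j = liftp x \<longleftrightarrow> x = Up j" by (cases x) auto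
lemma liftp_CU': "CU j \<noteq> liftp x" by (cases x) auto
lemma liftq_CU': "CU j = liftq x \<longleftrightarrow> x = Up j" by (cases x) auto
lemma liftq_CM': "CM j = liftq x \<longleftrightarrow> x = Lo j" by (cases x) auto
lemma liftq_CL': "CL j \<noteq> liftq x" by (cases x) auto

lemma compK:
  assumes r: "r \<in> P m s" and q: "q \<in> P 0 m"
    and cond: "\<And>c. c \<in> r \<Longrightarrow> c \<subseteq> range Lo \<or> c \<inter> range Lo \<subseteq> {Lo 1}"
  shows "comp r q = (\<lambda>c. if c \<subseteq> range Lo then c else {Lo 1}) ` {c \<in> r. c \<inter> range Lo \<noteq> {}}"
proof -
  define I where "I = {c \<in> r. c \<inter> range Lo \<noteq> {}}"
  define S where "S c = (if c \<subseteq> range Lo then liftp ` c else insert (CL 1) (range CM))" for c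
  have qLo: "b \<subseteq> range Lo" if "b \<in> q" for b
  proof
    fix x assume "x \<in> b"
    then have "x \<in> pts 0 m" using P_sub[OF q that] by blast
    then show "x \<in> range Lo" by (cases x) auto
  qed
  have qCM: "y \<in> range CM" if "b \<in> q" "y \<in> liftq ` b" for b y
    using qLo[OF that(1)] that(2) by auto
  have rdis: "\<And>b c x. b \<in> r \<Longrightarrow> c \<in> r \<Longrightarrow> x \<in> b \<Longrightarrow> x \<in> c \<Longrightarrow> b = c"
    using P_D(2)[OF r] by blast
  have closed: "z \<in> S c" if c: "c \<in> I" and y: "y \<in> S c" and e: "(y, z) \<in> comp_edges r q" for c y z
  proof -
    from e consider (top) b where "b \<in> q" "y \<in> liftq ` b" "z \<in> liftq ` b"
      | (bot) b where "b \<in> r" "y \<in> liftp ` b" "z \<in> liftp ` b"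
      unfolding comp_edges_def by blast
    then show ?thesis
    proof cases
      case top
      then have "y \<in> range CM" "z \<in> range CM" using qCM by auto
      then show ?thesis using y by (auto simp: S_def split: if_splits)
    next
      case bot
      then obtain a a' where a: "a \<in> b" "y = liftp a" "a' \<in> b" "z = liftp a'" by blast
      show ?thesis
      proof (cases "c \<subseteq> range Lo")
        case True
        then obtain a0 where "a0 \<in> c" "y = liftp a0" using y by (auto simp: S_def)
        then have "a0 = a" using a inj_liftp by (auto dest: injD)
        then have "b = c" using rdis \<open>a0 \<in> c\<close> a(1) bot(1) c by (auto simp: I_def)
        then show ?thesis using a True by (auto simp: S_def)
      next
        case False
        then have SS: "S c = insert (CL 1) (range CM)" by (simp add: S_def)
        from c False cond have cL: "c \<inter> range Lo = {Lo 1}" by (auto simp: I_def)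
        then have L1: "Lo 1 \<in> c" by auto
        show ?thesis
        proof (cases a)
          case (Up i)
          then have "\<not> b \<subseteq> range Lo" using a(1) by auto
          then have "b \<inter> range Lo \<subseteq> {Lo 1}" using cond bot(1) by blast
          then show ?thesis using a SS by (cases a') auto
        next
          case (Lo j)
          then have "j = 1" using y a SS by auto
          then have "b = c" using rdis L1 a(1) Lo bot(1) c by (auto simp: I_def)
          then show ?thesis using a SS cL by (cases a') auto
        qed
      qed
    qed
  qed
  have conn: "(y, z) \<in> (comp_edges r q)\<^sup>*"
    if "c \<in> I" "y \<in> S c" "z \<in> S c" "\<not> is_mid y" "\<not> is_mid z" for c y z
  proof (cases "c \<subseteq> range Lo")
    case True
    then have "(y, z) \<in> comp_edges r q" using that unfolding comp_edges_def S_def I_def by auto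
    then show ?thesis by blast
  next
    case False
    then have "y = CL 1" "z = CL 1" using that by (auto simp: S_def)
    then show ?thesis by simp
  qed
  have cover: "\<exists>c\<in>I. x \<in> S c" if xV: "x \<in> V r q" and xm: "\<not> is_mid x" for x
  proof -
    from xV consider (top) b where "b \<in> q" "x \<in> liftq ` b" | (bot) b where "b \<in> r" "x \<in> liftp ` b"
      unfolding V_def by blast
    then show ?thesis
    proof cases
      case top then have "x \<in> range CM" using qCM by blast
      then show ?thesis using xm by auto
    next
      case bot
      then obtain a where a: "a \<in> b" "x = liftp a" by blast
      then obtain j where j: "a = Lo j" using xm by (cases a) auto
      then have "b \<in> I" using a bot by (auto simp: I_def)
      moreover have "x \<in> S b"
      proof (cases "b \<subseteq> range Lo")
        case True then show ?thesis using a by (simp add: S_def)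
      next
        case False
        then have "j = 1" using cond[OF bot(1)] a j by auto
        then show ?thesis using False a j by (simp add: S_def)
      qed
      ultimately show ?thesis by blast
    qed
  qed
  have nonempty: "\<exists>x. x \<in> V r q \<and> \<not> is_mid x \<and> x \<in> S c" if "c \<in> I" for c
  proof -
    have "c \<in> r" "c \<inter> range Lo \<noteq> {}" using that by (auto simp: I_def)
    then obtain j where j: "Lo j \<in> c" "c \<in> r" by blast
    have "CL j \<in> V r q" using j unfolding V_def by force
    moreover have "CL j \<in> S c"
    proof (cases "c \<subseteq> range Lo")
      case True then show ?thesis using j by (force simp: S_def)
    next
      case False
      then have "j = 1" using cond[OF j(2)] j by auto
      then show ?thesis using False by (simp add: S_def)
    qed
    ultimately show ?thesis by auto
  qed
  have "comp r q = (\<lambda>c. unlift ` {y \<in> S c. \<not> is_mid y}) ` I"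
    by (rule comp_components[OF closed conn cover nonempty]) blast+
  also have "\<dots> = (\<lambda>c. if c \<subseteq> range Lo then c else {Lo 1}) ` I"
  proof (rule image_cong[OF refl])
    fix c assume "c \<in> I"
    show "unlift ` {y \<in> S c. \<not> is_mid y} = (if c \<subseteq> range Lo then c else {Lo 1})"
    proof (cases "c \<subseteq> range Lo")
      case True
      have "{y \<in> S c. \<not> is_mid y} = liftp ` c" using True by (auto simp: S_def)
      moreover have "unlift ` liftp ` c = c" using True by (force simp: image_image)
      ultimately show ?thesis using True by simp
    next
      case False
      have "{y \<in> S c. \<not> is_mid y} = {CL 1}" using False by (auto simp: S_def)
      then show ?thesis using False by simp
    qed
  qed
  finally show ?thesis by (simp add: I_def)
qed



declare liftp_CL[simp] liftp_CM[simp] liftp_CU[simp] liftq_CU[simp] liftq_CM[simp] liftq_CL[simp]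
  liftp_CL'[simp] liftp_CM'[simp] liftp_CU'[simp] liftq_CU'[simp] liftq_CM'[simp] liftq_CL'[simp]

definition lo :: "(nat \<Rightarrow> nat) \<Rightarrow> pt \<Rightarrow> pt" where
  "lo \<sigma> x = (case x of Up i \<Rightarrow> Up i | Lo j \<Rightarrow> Lo (\<sigma> j))"

lemma lo_simps[simp]: "lo \<sigma> (Up i) = Up i" "lo \<sigma> (Lo j) = Lo (\<sigma> j)"
  by (simp_all add: lo_def)

definition permp :: "nat \<Rightarrow> (nat \<Rightarrow> nat) \<Rightarrow> pt set set" where
  "permp l \<sigma> = (\<lambda>i. {Up i, Lo (\<sigma> i)}) ` {1..l}"

lemma compC1:
  assumes p: "p \<in> P k l" and \<sigma>: "bij_betw \<sigma> {1..l} {1..l}"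
  shows "comp (permp l \<sigma>) p = img (lo \<sigma>) p"
proof -
  define S where "S c = liftq ` c \<union> {CL (\<sigma> j) | j. Lo j \<in> c}" for c
  have pdis: "\<And>b c x. b \<in> p \<Longrightarrow> c \<in> p \<Longrightarrow> x \<in> b \<Longrightarrow> x \<in> c \<Longrightarrow> b = c"
    using P_D(2)[OF p] by blast
  have inj: "\<And>i j. i \<in> {1..l} \<Longrightarrow> j \<in> {1..l} \<Longrightarrow> \<sigma> i = \<sigma> j \<Longrightarrow> i = j"
    using \<sigma> unfolding bij_betw_def inj_on_def by blast
  have Loin: "j \<in> {1..l}" if "Lo j \<in> c" "c \<in> p" for j c
    using P_sub[OF p that(2)] that(1) by auto
  have closed: "z \<in> S c" if c: "c \<in> p" and y: "y \<in> S c" and e: "(y, z) \<in> comp_edges (permp l \<sigma>) p" for c y z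
  proof -
    from e consider (top) b where "b \<in> p" "y \<in> liftq ` b" "z \<in> liftq ` b"
      | (bot) i where "i \<in> {1..l}" "y \<in> {CM i, CL (\<sigma> i)}" "z \<in> {CM i, CL (\<sigma> i)}"
      unfolding comp_edges_def permp_def by auto
    then show ?thesis
    proof cases
      case top
      then obtain a where a: "a \<in> b" "y = liftq a" by blast
      have "y \<in> liftq ` c" using y a by (auto simp: S_def liftq_CL)
      then obtain a' where "a' \<in> c" "y = liftq a'" by blast
      then have "a' = a" using a inj_liftq by (auto dest: injD)
      then have "b = c" using pdis \<open>a' \<in> c\<close> a top c by blast
      then show ?thesis using top by (auto simp: S_def)
    next
      case bot
      have "Lo i \<in> c"
      proof (cases "y = CM i")
        case True then show ?thesis using y by (auto simp: S_def liftq_CM')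
      next
        case False
        then have "y = CL (\<sigma> i)" using bot by auto
        then obtain j where "Lo j \<in> c" "\<sigma> j = \<sigma> i" using y by (auto simp: S_def liftq_CL)
        then show ?thesis using inj Loin c bot(1) by metis
      qed
      then show ?thesis using bot by (force simp: S_def)
    qed
  qed
  have conn: "(y, z) \<in> (comp_edges (permp l \<sigma>) p)\<^sup>*"
    if c: "c \<in> p" and "y \<in> S c" "z \<in> S c" for c y z
  proof (rule hub_conn[of "liftq ` c" "S c"])
    show "liftq ` c \<subseteq> S c" by (auto simp: S_def)
    show "(h, h') \<in> comp_edges (permp l \<sigma>) p" if "h \<in> liftq ` c" "h' \<in> liftq ` c" for h h'
      using that c unfolding comp_edges_def by blast
    show "\<exists>h\<in>liftq ` c. (w, h) \<in> (comp_edges (permp l \<sigma>) p)\<^sup>*" if ws: "w \<in> S c" for w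
    proof (cases "w \<in> liftq ` c")
      case True then show ?thesis by blast
    next
      case False
      then obtain j where j: "Lo j \<in> c" "w = CL (\<sigma> j)" using ws by (auto simp: S_def)
      then have "j \<in> {1..l}" using Loin c by blast
      then have "(w, CM j) \<in> comp_edges (permp l \<sigma>) p"
        unfolding comp_edges_def permp_def using j by force
      then show ?thesis using j by force
    qed
  qed (use that in auto)
  have cover: "\<exists>c\<in>p. x \<in> S c" if xV: "x \<in> V (permp l \<sigma>) p" and xm: "\<not> is_mid x" for x
  proof -
    from xV consider (top) b where "b \<in> p" "x \<in> liftq ` b"
      | (bot) i where "i \<in> {1..l}" "x \<in> {CM i, CL (\<sigma> i)}"
      unfolding V_def permp_def by auto
    then show ?thesis
    proof cases
      case top then show ?thesis by (auto simp: S_def)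
    next
      case bot
      then have x: "x = CL (\<sigma> i)" using xm by auto
      have "Lo i \<in> pts k l" using bot by auto
      then obtain c where "c \<in> p" "Lo i \<in> c" using P_cover[OF p] by blast
      then show ?thesis using x by (auto simp: S_def)
    qed
  qed
  have nonempty: "\<exists>x. x \<in> V (permp l \<sigma>) p \<and> \<not> is_mid x \<and> x \<in> S c" if c: "c \<in> p" for c
  proof -
    obtain a where a: "a \<in> c" using P_D(3)[OF p] c by (metis all_not_in_conv)
    show ?thesis
    proof (cases a)
      case (Up i)
      then show ?thesis using a c unfolding V_def S_def by force
    next
      case (Lo j)
      then have "j \<in> {1..l}" using Loin a c by blast
      then have "CL (\<sigma> j) \<in> V (permp l \<sigma>) p" unfolding V_def permp_def by force
      then show ?thesis using a Lo unfolding S_def by force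
    qed
  qed
  have "comp (permp l \<sigma>) p = (\<lambda>c. unlift ` {y \<in> S c. \<not> is_mid y}) ` p"
    by (rule comp_components[OF closed conn cover nonempty]) blast+
  also have "\<dots> = img (lo \<sigma>) p"
    unfolding img_def
  proof (rule image_cong[OF refl])
    fix c assume "c \<in> p"
    show "unlift ` {y \<in> S c. \<not> is_mid y} = lo \<sigma> ` c"
    proof (intro equalityI subsetI)
      fix x assume "x \<in> unlift ` {y \<in> S c. \<not> is_mid y}"
      then obtain y where y: "y \<in> S c" "\<not> is_mid y" "x = unlift y" by blast
      then consider (a) a where "a \<in> c" "y = liftq a" | (b) j where "Lo j \<in> c" "y = CL (\<sigma> j)"
        by (auto simp: S_def)
      then show "x \<in> lo \<sigma> ` c"
      proof cases
        case a then show ?thesis using y by (cases a) force+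
      next
        case b then show ?thesis using y by force
      qed
    next
      fix x assume "x \<in> lo \<sigma> ` c"
      then obtain a where a: "a \<in> c" "x = lo \<sigma> a" by blast
      show "x \<in> unlift ` {y \<in> S c. \<not> is_mid y}"
      proof (cases a)
        case (Up i)
        then have "CU i \<in> {y \<in> S c. \<not> is_mid y}" using a by (force simp: S_def)
        then show ?thesis using a Up by force
      next
        case (Lo j)
        then have "CL (\<sigma> j) \<in> {y \<in> S c. \<not> is_mid y}" using a by (force simp: S_def)
        then show ?thesis using a Lo by force
      qed
    qed
  qed
  finally show ?thesis .
qed



definition idn :: "nat \<Rightarrow> pt set set" where
  "idn c = (\<lambda>i. {Up i, Lo i}) ` {1..c}"

definition rotp :: "nat \<Rightarrow> pt \<Rightarrow> pt" where
  "rotp a x = (case x of Up i \<Rightarrow> if i \<le> a then Lo (a + 1 - i) else Up (i - a) | Lo j \<Rightarrow> Lo (a + j))"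

lemma rotp_simps[simp]: "rotp a (Up i) = (if i \<le> a then Lo (a + 1 - i) else Up (i - a))"
  "rotp a (Lo j) = Lo (a + j)"
  by (simp_all add: rotp_def)

lemma top_eq: "tensor 0 2 pairp (idn c) = insert {Lo 1, Lo 2} ((\<lambda>i. {Up i, Lo (i + 2)}) ` {1..c})"
  by (auto simp: tensor_def pairp_def idn_def image_image)

lemma bot_eq: "tensor 1 1 idp p = insert {Up 1, Lo 1} ((\<lambda>b. shift_pt 1 1 ` b) ` p)"
  by (simp add: tensor_def idp_def)

definition gg :: "pt \<Rightarrow> cpt" where "gg x = liftp (shift_pt 1 1 x)"

lemma gg_simps[simp]: "gg (Up i) = CM (Suc i)" "gg (Lo j) = CL (Suc j)"
  by (simp_all add: gg_def)

lemma edgesC2: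
  "(y, z) \<in> comp_edges (tensor 1 1 idp p) (tensor 0 2 pairp (idn c)) \<longleftrightarrow>
     (y \<in> {CM 1, CM 2} \<and> z \<in> {CM 1, CM 2}) \<or>
     (\<exists>i\<in>{1..c}. y \<in> {CU i, CM (i + 2)} \<and> z \<in> {CU i, CM (i + 2)}) \<or>
     (y \<in> {CM 1, CL 1} \<and> z \<in> {CM 1, CL 1}) \<or>
     (\<exists>b\<in>p. y \<in> gg ` b \<and> z \<in> gg ` b)"
  unfolding comp_edges_def top_eq bot_eq gg_def by (auto simp: image_image)

definition inS :: "pt set \<Rightarrow> cpt \<Rightarrow> bool" where
  "inS c0 x = (case x of CU i \<Rightarrow> 1 \<le> i \<and> Up (Suc i) \<in> c0
     | CM i \<Rightarrow> (i = 1 \<and> Up 1 \<in> c0) \<or> (2 \<le> i \<and> Up (i - 1) \<in> c0)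
     | CL j \<Rightarrow> (j = 1 \<and> Up 1 \<in> c0) \<or> (2 \<le> j \<and> Lo (j - 1) \<in> c0))"

lemma inS_simps[simp]: "inS c0 (CU i) \<longleftrightarrow> 1 \<le> i \<and> Up (Suc i) \<in> c0"
  "inS c0 (CM i) \<longleftrightarrow> (i = 1 \<and> Up 1 \<in> c0) \<or> (2 \<le> i \<and> Up (i - 1) \<in> c0)"
  "inS c0 (CL j) \<longleftrightarrow> (j = 1 \<and> Up 1 \<in> c0) \<or> (2 \<le> j \<and> Lo (j - 1) \<in> c0)"
  by (simp_all add: inS_def)

lemma compC2:
  assumes p: "p \<in> P (Suc c) l"
  shows "comp (tensor 1 1 idp p) (tensor 0 2 pairp (idn c)) = img (rotp 1) p"
proof -
  let ?E = "comp_edges (tensor 1 1 idp p) (tensor 0 2 pairp (idn c))"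
  define S where "S c0 = Collect (inS c0)" for c0
  have pdis: "\<And>b c x. b \<in> p \<Longrightarrow> c \<in> p \<Longrightarrow> x \<in> b \<Longrightarrow> x \<in> c \<Longrightarrow> b = c"
    using P_D(2)[OF p] by blast
  have inpts: "x \<in> pts (Suc c) l" if "x \<in> c0" "c0 \<in> p" for x c0
    using P_sub[OF p that(2)] that(1) by auto
  have ggS: "gg a \<in> S c0" if "a \<in> c0" "c0 \<in> p" for a c0
    using inpts[OF that] that by (cases a) (auto simp: S_def)
  have Sgg: "\<exists>a\<in>c0. x = gg a" if "x \<in> S c0" "c0 \<in> p" "x \<noteq> CM 1" "x \<noteq> CL 1" "\<not> (\<exists>i. x = CU i)"
    for x c0
  proof (cases x)
    case (CU i) then show ?thesis using that by auto
  next
    case (CM i) then have "2 \<le> i" "Up (i - 1) \<in> c0" using that by (auto simp: S_def)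
    then show ?thesis using CM by (intro bexI[of _ "Up (i - 1)"]) auto
  next
    case (CL j) then have "2 \<le> j" "Lo (j - 1) \<in> c0" using that by (auto simp: S_def)
    then show ?thesis using CL by (intro bexI[of _ "Lo (j - 1)"]) auto
  qed
  have gg_inj: "a = a'" if "gg a = gg a'" for a a'
    using that by (cases a; cases a') auto
  have closed: "z \<in> S c0" if c0: "c0 \<in> p" and y: "y \<in> S c0" and e: "(y, z) \<in> ?E" for c0 y z
  proof -
    from e[unfolded edgesC2] consider
        (t1) "y \<in> {CM 1, CM 2}" "z \<in> {CM 1, CM 2}"
      | (t2) i where "i \<in> {1..c}" "y \<in> {CU i, CM (i + 2)}" "z \<in> {CU i, CM (i + 2)}"
      | (b1) "y \<in> {CM 1, CL 1}" "z \<in> {CM 1, CL 1}"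
      | (b2) b where "b \<in> p" "y \<in> gg ` b" "z \<in> gg ` b"
      by blast
    then show ?thesis
    proof cases
      case t1 then show ?thesis using y by (auto simp: S_def)
    next
      case t2 then show ?thesis using y by (auto simp: S_def)
    next
      case b1 then show ?thesis using y by (auto simp: S_def)
    next
      case b2
      then obtain a where a: "a \<in> b" "y = gg a" by blast
      have "a \<in> pts (Suc c) l" using inpts a b2 by blast
      then have "y \<noteq> CM 1" "y \<noteq> CL 1" "\<not> (\<exists>i. y = CU i)" using a by (cases a; auto)+
      then obtain a' where "a' \<in> c0" "y = gg a'" using Sgg y c0 by blast
      then have "a' = a" using a gg_inj by blast
      then have "b = c0" using pdis \<open>a' \<in> c0\<close> a b2 c0 by blast
      then show ?thesis using b2 ggS c0 by blast
    qed
  qed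
  have conn: "(y, z) \<in> ?E\<^sup>*" if c0: "c0 \<in> p" and "y \<in> S c0" "z \<in> S c0" for c0 y z
  proof (rule hub_conn[of "gg ` c0" "S c0"])
    show "gg ` c0 \<subseteq> S c0" using ggS c0 by blast
    show "(h, h') \<in> ?E" if "h \<in> gg ` c0" "h' \<in> gg ` c0" for h h'
      using that c0 unfolding edgesC2 by blast
    show "\<exists>h\<in>gg ` c0. (w, h) \<in> ?E\<^sup>*" if ws: "w \<in> S c0" for w
    proof (cases "w \<in> gg ` c0")
      case True then show ?thesis by blast
    next
      case False
      have ex: "(CM 1, CM 2) \<in> ?E" unfolding edgesC2 by simp
      have ex2: "(CL 1, CM 1) \<in> ?E" unfolding edgesC2 by simp
      consider (u) i where "w = CU i" | (m) "w = CM 1" | (l) "w = CL 1"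
        using Sgg[OF ws c0] False by blast
      then show ?thesis
      proof cases
        case u
        then have i: "1 \<le> i" "Up (Suc i) \<in> c0" using ws by (auto simp: S_def)
        then have "i \<le> c" using inpts c0 by force
        then have "(w, CM (i + 2)) \<in> ?E" unfolding edgesC2 using u i by auto
        moreover have "CM (i + 2) \<in> gg ` c0" using i by force
        ultimately show ?thesis by blast
      next
        case m
        then have "Up 1 \<in> c0" using ws by (auto simp: S_def)
        then have "CM 2 \<in> gg ` c0" by force
        then show ?thesis using ex m by blast
      next
        case l
        then have "Up 1 \<in> c0" using ws by (auto simp: S_def)
        then have "CM 2 \<in> gg ` c0" by force
        moreover have "(w, CM 2) \<in> ?E\<^sup>*" using ex ex2 l by (meson r_into_rtrancl rtrancl_into_rtrancl)
        ultimately show ?thesis by blast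
      qed
    qed
  qed (use that in auto)
  have cover: "\<exists>c0\<in>p. x \<in> S c0" if xV: "x \<in> V (tensor 1 1 idp p) (tensor 0 2 pairp (idn c))"
    and xm: "\<not> is_mid x" for x
  proof -
    from xV consider (t) i where "i \<in> {1..c}" "x = CU i" | (b) "x = CL 1"
      | (g) b a where "b \<in> p" "a \<in> b" "x = gg a"
      using xm unfolding V_def top_eq bot_eq gg_def by (auto simp: image_image)
    then show ?thesis
    proof cases
      case t
      then have "Up (Suc i) \<in> pts (Suc c) l" by auto
      then obtain c0 where "c0 \<in> p" "Up (Suc i) \<in> c0" using P_cover[OF p] by blast
      then show ?thesis using t by (auto simp: S_def)
    next
      case b
      have "Up 1 \<in> pts (Suc c) l" by auto
      then obtain c0 where "c0 \<in> p" "Up 1 \<in> c0" using P_cover[OF p] by blast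
      then show ?thesis using b by (auto simp: S_def)
    next
      case g then show ?thesis using ggS by blast
    qed
  qed
  have nonempty: "\<exists>x. x \<in> V (tensor 1 1 idp p) (tensor 0 2 pairp (idn c)) \<and> \<not> is_mid x \<and> x \<in> S c0"
    if c0: "c0 \<in> p" for c0
  proof -
    obtain a where a: "a \<in> c0" using P_D(3)[OF p] c0 by (metis all_not_in_conv)
    have apts: "a \<in> pts (Suc c) l" using inpts a c0 by blast
    show ?thesis
    proof (cases a)
      case (Up i)
      show ?thesis
      proof (cases "i = 1")
        case True
        then have "CL 1 \<in> V (tensor 1 1 idp p) (tensor 0 2 pairp (idn c))"
          unfolding V_def bot_eq by auto
        then show ?thesis using a Up True by (auto simp: S_def)
      next
        case False
        have "1 \<le> i" "i \<le> Suc c" using apts Up by auto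
        then obtain i' where i': "i = Suc i'" "1 \<le> i'" "i' \<le> c" using False
          by (intro that[of "i - 1"]) auto
        then have "CU i' \<in> V (tensor 1 1 idp p) (tensor 0 2 pairp (idn c))"
          unfolding V_def top_eq by force
        then show ?thesis using a Up i' by (auto simp: S_def)
      qed
    next
      case (Lo j)
      then have "CL (Suc j) \<in> V (tensor 1 1 idp p) (tensor 0 2 pairp (idn c))"
        unfolding V_def bot_eq using a c0 by (force simp: image_image)
      then show ?thesis using a Lo ggS c0 by force
    qed
  qed
  have "comp (tensor 1 1 idp p) (tensor 0 2 pairp (idn c)) = (\<lambda>c0. unlift ` {y \<in> S c0. \<not> is_mid y}) ` p"
    by (rule comp_components[OF closed conn cover nonempty]) blast+
  also have "\<dots> = img (rotp 1) p"
    unfolding img_def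
  proof (rule image_cong[OF refl])
    fix c0 assume c0: "c0 \<in> p"
    show "unlift ` {y \<in> S c0. \<not> is_mid y} = rotp 1 ` c0"
    proof (intro equalityI subsetI)
      fix x assume "x \<in> unlift ` {y \<in> S c0. \<not> is_mid y}"
      then obtain y where y: "y \<in> S c0" "\<not> is_mid y" "x = unlift y" by blast
      show "x \<in> rotp 1 ` c0"
      proof (cases y)
        case (CU i)
        then have "1 \<le> i" "Up (Suc i) \<in> c0" using y by (auto simp: S_def)
        then show ?thesis using y CU by (intro image_eqI[of _ _ "Up (Suc i)"]) auto
      next
        case (CM i) then show ?thesis using y by simp
      next
        case (CL j)
        then have "(j = 1 \<and> Up 1 \<in> c0) \<or> (2 \<le> j \<and> Lo (j - 1) \<in> c0)" using y by (auto simp: S_def)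
        then show ?thesis
        proof
          assume "j = 1 \<and> Up 1 \<in> c0"
          then show ?thesis using y CL by (intro image_eqI[of _ _ "Up 1"]) auto
        next
          assume "2 \<le> j \<and> Lo (j - 1) \<in> c0"
          then show ?thesis using y CL by (intro image_eqI[of _ _ "Lo (j - 1)"]) auto
        qed
      qed
    next
      fix x assume "x \<in> rotp 1 ` c0"
      then obtain a where a: "a \<in> c0" "x = rotp 1 a" by blast
      have apts: "a \<in> pts (Suc c) l" using inpts a c0 by blast
      show "x \<in> unlift ` {y \<in> S c0. \<not> is_mid y}"
      proof (cases a)
        case (Up i)
        show ?thesis
        proof (cases "i = 1")
          case True
          then have "CL 1 \<in> {y \<in> S c0. \<not> is_mid y}" using a Up by (auto simp: S_def)
          then show ?thesis using a Up True by force
        next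
          case False
          have "1 \<le> i" using apts Up by auto
          then obtain i' where i': "i = Suc i'" "1 \<le> i'" using False
            by (intro that[of "i - 1"]) auto
          then have "CU i' \<in> {y \<in> S c0. \<not> is_mid y}" using a Up by (auto simp: S_def)
          then show ?thesis using a Up i' by force
        qed
      next
        case (Lo j)
        then have "CL (Suc j) \<in> {y \<in> S c0. \<not> is_mid y}" using a apts by (auto simp: S_def)
        then show ?thesis using a Lo by force
      qed
    qed
  qed
  finally show ?thesis .
qed



lemma catD:
  assumes "is_category Px"
  shows "Px k l \<subseteq> P k l"
    "p \<in> Px k l \<Longrightarrow> q \<in> Px k' l' \<Longrightarrow> tensor k l p q \<in> Px (k + k') (l + l')"
    "p \<in> Px m l \<Longrightarrow> q \<in> Px k m \<Longrightarrow> comp p q \<in> Px k l"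
    "p \<in> Px k l \<Longrightarrow> invol p \<in> Px l k"
    "idp \<in> Px 1 1" "crossp \<in> Px 2 2" "pairp \<in> Px 0 2"
proof -
  note H = assms[unfolded is_category_def]
  show "Px k l \<subseteq> P k l" using conjunct1[OF H] by blast
  show "p \<in> Px k l \<Longrightarrow> q \<in> Px k' l' \<Longrightarrow> tensor k l p q \<in> Px (k + k') (l + l')"
    using conjunct1[OF conjunct2[OF H]] by blast
  show "p \<in> Px m l \<Longrightarrow> q \<in> Px k m \<Longrightarrow> comp p q \<in> Px k l"
    using conjunct1[OF conjunct2[OF conjunct2[OF H]]] by blast
  show "p \<in> Px k l \<Longrightarrow> invol p \<in> Px l k"
    using conjunct1[OF conjunct2[OF conjunct2[OF conjunct2[OF H]]]] by blast
  show "idp \<in> Px 1 1" "crossp \<in> Px 2 2" "pairp \<in> Px 0 2" using H by simp_all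
qed

lemma cat_P: "is_category Px \<Longrightarrow> p \<in> Px k l \<Longrightarrow> p \<in> P k l"
  using catD(1) by blast

lemma empty_in:
  assumes cat: "is_category Px"
  shows "{} \<in> Px 0 0"
proof -
  have r: "invol pairp \<in> Px 2 0" using catD(4,7)[OF cat] by blast
  have q: "pairp \<in> Px 0 2" using catD(7)[OF cat] .
  have ip: "invol pairp = {{Up 1, Up 2}}" by (simp add: invol_def pairp_def)
  have "comp (invol pairp) pairp = {}"
    by (subst compK[OF cat_P[OF cat r] cat_P[OF cat q]]) (auto simp: ip)
  then show ?thesis using catD(3)[OF cat r q] by simp
qed

lemma tensor_empty: "tensor k l p {} = p" by (simp add: tensor_def)

lemma idn_in:
  assumes cat: "is_category Px"
  shows "idn c \<in> Px c c"
proof (induction c)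
  case 0 then show ?case using empty_in[OF cat] by (simp add: idn_def)
next
  case (Suc c)
  have "tensor c c (idn c) idp = idn (Suc c)"
    by (auto simp: tensor_def idn_def idp_def)
  then show ?case using catD(2)[OF cat Suc catD(5)[OF cat]] by simp
qed

lemma rot1:
  assumes cat: "is_category Px" and p: "p \<in> Px (Suc c) l"
  shows "img (rotp 1) p \<in> Px c (Suc l)"
proof -
  have b: "tensor 1 1 idp p \<in> Px (Suc (Suc c)) (Suc l)"
    using catD(2)[OF cat catD(5)[OF cat] p] by simp
  have t: "tensor 0 2 pairp (idn c) \<in> Px c (Suc (Suc c))"
    using catD(2)[OF cat catD(7)[OF cat] idn_in[OF cat, of c]] by simp
  show ?thesis
    using catD(3)[OF cat b t] compC2[OF cat_P[OF cat p]] by simp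
qed

lemma rotA:
  assumes cat: "is_category Px"
  shows "p \<in> Px (a + c) l \<Longrightarrow> img (rotp a) p \<in> Px c (a + l)"
proof (induction a arbitrary: l p)
  case 0
  have "img (rotp 0) p = img id p"
  proof (rule img_cong)
    fix x assume "x \<in> \<Union>p"
    then have "x \<in> pts c l" using P_D(1)[OF cat_P[OF cat 0[simplified]]] by simp
    then show "rotp 0 x = id x" by (cases x) auto
  qed
  then show ?case using 0 by (simp add: img_id)
next
  case (Suc a)
  have p: "p \<in> Px (Suc (a + c)) l" using Suc.prems by simp
  have "img (rotp 1) p \<in> Px (a + c) (Suc l)" by (rule rot1[OF cat p])
  then have "img (rotp a) (img (rotp 1) p) \<in> Px c (a + Suc l)" by (rule Suc.IH)
  moreover have "img (rotp a) (img (rotp 1) p) = img (rotp (Suc a)) p"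
    unfolding img_comp
  proof (rule img_cong)
    fix x assume "x \<in> \<Union>p"
    then have "x \<in> pts (Suc (a + c)) l" using P_D(1)[OF cat_P[OF cat p]] by simp
    then show "(rotp a \<circ> rotp 1) x = rotp (Suc a) x" by (cases x) auto
  qed
  ultimately show ?case by simp
qed

lemma permp_adj:
  assumes j: "1 \<le> j" "Suc j \<le> l"
  shows "permp l (transpose j (Suc j)) =
    tensor (Suc j) (Suc j) (tensor (j - 1) (j - 1) (idn (j - 1)) crossp) (idn (l - Suc j))"
proof (intro equalityI subsetI)
  fix B assume "B \<in> permp l (transpose j (Suc j))"
  then obtain i where i: "i \<in> {1..l}" "B = {Up i, Lo (transpose j (Suc j) i)}"
    unfolding permp_def by blast
  have T: "tensor (Suc j) (Suc j) (tensor (j - 1) (j - 1) (idn (j - 1)) crossp) (idn (l - Suc j))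
     = (\<lambda>i. {Up i, Lo i}) ` {1..j - 1} \<union> {{Up (1 + (j - 1)), Lo (2 + (j - 1))}, {Up (2 + (j - 1)), Lo (1 + (j - 1))}}
       \<union> (\<lambda>i. {Up (i + Suc j), Lo (i + Suc j)}) ` {1..l - Suc j}"
    unfolding tensor_def idn_def crossp_def by (auto simp: image_image)
  consider "i < j" | "i = j" | "i = Suc j" | "Suc j < i" by linarith
  then show "B \<in> tensor (Suc j) (Suc j) (tensor (j - 1) (j - 1) (idn (j - 1)) crossp) (idn (l - Suc j))"
  proof cases
    case 1
    then have "B = {Up i, Lo i}" using i by simp
    moreover have "i \<in> {1..j - 1}" using 1 i by auto
    ultimately show ?thesis unfolding T by blast
  next
    case 2
    then have "B = {Up (1 + (j - 1)), Lo (2 + (j - 1))}" using i j by simp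
    then show ?thesis unfolding T by blast
  next
    case 3
    then have "B = {Up (2 + (j - 1)), Lo (1 + (j - 1))}" using i j by auto
    then show ?thesis unfolding T by blast
  next
    case 4
    then have "B = {Up ((i - Suc j) + Suc j), Lo ((i - Suc j) + Suc j)}" using i by simp
    moreover have "i - Suc j \<in> {1..l - Suc j}" using 4 i by auto
    ultimately show ?thesis unfolding T by blast
  qed
next
  fix B assume B: "B \<in> tensor (Suc j) (Suc j) (tensor (j - 1) (j - 1) (idn (j - 1)) crossp) (idn (l - Suc j))"
  have mem: "{Up i, Lo (transpose j (Suc j) i)} \<in> permp l (transpose j (Suc j))" if "i \<in> {1..l}" for i
    using that unfolding permp_def by blast
  from B consider (a) i where "i \<in> {1..j - 1}" "B = {Up i, Lo i}"
    | (b) "B = {Up (1 + (j - 1)), Lo (2 + (j - 1))}"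
    | (c) "B = {Up (2 + (j - 1)), Lo (1 + (j - 1))}"
    | (d) i where "i \<in> {1..l - Suc j}" "B = {Up (i + Suc j), Lo (i + Suc j)}"
    unfolding tensor_def idn_def crossp_def by (auto simp: image_image)
  then show "B \<in> permp l (transpose j (Suc j))"
  proof cases
    case a
    then have "i \<in> {1..l}" "transpose j (Suc j) i = i" using j by auto
    then show ?thesis using mem[of i] a by simp
  next
    case b
    then have "B = {Up j, Lo (transpose j (Suc j) j)}" using j by simp
    then show ?thesis using mem[of j] j by simp
  next
    case c
    then have "B = {Up (Suc j), Lo (transpose j (Suc j) (Suc j))}" using j by simp
    then show ?thesis using mem[of "Suc j"] j by simp
  next
    case d
    then have "i + Suc j \<in> {1..l}" "transpose j (Suc j) (i + Suc j) = i + Suc j" by auto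
    then show ?thesis using mem[of "i + Suc j"] d by simp
  qed
qed

lemma lo_adj:
  assumes cat: "is_category Px" and q: "q \<in> Px k l" and j: "1 \<le> j" "Suc j \<le> l"
  shows "img (lo (transpose j (Suc j))) q \<in> Px k l"
proof -
  have t1: "tensor (j - 1) (j - 1) (idn (j - 1)) crossp \<in> Px (Suc j) (Suc j)"
    using catD(2)[OF cat idn_in[OF cat, of "j - 1"] catD(6)[OF cat]] j by simp
  have "tensor (Suc j) (Suc j) (tensor (j - 1) (j - 1) (idn (j - 1)) crossp) (idn (l - Suc j))
      \<in> Px (Suc j + (l - Suc j)) (Suc j + (l - Suc j))"
    by (rule catD(2)[OF cat t1 idn_in[OF cat]])
  then have pp: "permp l (transpose j (Suc j)) \<in> Px l l" using j permp_adj[OF j] by simp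
  have bij: "bij_betw (transpose j (Suc j)) {1..l} {1..l}"
    by (rule permutes_imp_bij, rule permutes_swap_id) (use j in auto)
  show ?thesis using catD(3)[OF cat pp q] compC1[OF cat_P[OF cat q] bij] by simp
qed

lemma lo_comp: "lo (f \<circ> g) = lo f \<circ> lo g"
  by (auto simp: fun_eq_iff lo_def split: pt.splits)

lemma lo_id: "lo id = id"
  by (auto simp: fun_eq_iff lo_def split: pt.splits)

lemma transp_split:
  assumes "Suc a < b"
  shows "transpose a b = transpose a (Suc a) \<circ> transpose (Suc a) b \<circ> transpose a (Suc a)"
proof (rule ext)
  fix x show "transpose a b x = (transpose a (Suc a) \<circ> transpose (Suc a) b \<circ> transpose a (Suc a)) x"
    using assms by (simp add: transpose_def)
qed

lemma lo_transp_lt: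
  assumes cat: "is_category Px"
  shows "1 \<le> a \<Longrightarrow> a + Suc d \<le> l \<Longrightarrow> q \<in> Px k l \<Longrightarrow> img (lo (transpose a (a + Suc d))) q \<in> Px k l"
proof (induction d arbitrary: a q)
  case 0 then show ?case using lo_adj[OF cat, of q k l a] by simp
next
  case (Suc d)
  let ?t = "transpose a (Suc a)"
  have q1: "img (lo ?t) q \<in> Px k l" using lo_adj[OF cat Suc.prems(3), of a] Suc.prems by simp
  have q2: "img (lo (transpose (Suc a) (Suc a + Suc d))) (img (lo ?t) q) \<in> Px k l"
    by (rule Suc.IH) (use Suc.prems q1 in auto)
  have q3: "img (lo ?t) (img (lo (transpose (Suc a) (Suc a + Suc d))) (img (lo ?t) q)) \<in> Px k l"
    using lo_adj[OF cat q2, of a] Suc.prems by simp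
  let ?T2 = "transpose (Suc a) (Suc a + Suc d)"
  have eq: "transpose a (a + Suc (Suc d)) = ?t \<circ> ?T2 \<circ> ?t"
    using transp_split[of a "a + Suc (Suc d)"] by simp
  have "img (lo (transpose a (a + Suc (Suc d)))) q = img (lo ?t) (img (lo ?T2) (img (lo ?t) q))"
    by (simp only: eq lo_comp img_comp comp_assoc)
  then show ?case using q3 by simp
qed

lemma lo_transp:
  assumes cat: "is_category Px" and q: "q \<in> Px k l" and ab: "a \<in> {1..l}" "b \<in> {1..l}"
  shows "img (lo (transpose a b)) q \<in> Px k l"
proof -
  have main: "img (lo (transpose a b)) q \<in> Px k l" if "a < b" "a \<in> {1..l}" "b \<in> {1..l}" for a b
  proof -
    obtain d where "b = a + Suc d" using less_imp_Suc_add[OF \<open>a < b\<close>] by auto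
    then show ?thesis using lo_transp_lt[OF cat, of a d l q k] that q by simp
  qed
  consider "a < b" | "a = b" | "b < a" by linarith
  then show ?thesis
  proof cases
    case 1 then show ?thesis using main ab by blast
  next
    case 2 then show ?thesis using q by (simp add: lo_id img_id)
  next
    case 3 then show ?thesis using main[of b a] ab by (simp only: transpose_commute[of a b])
  qed
qed

lemma lo_perm:
  assumes cat: "is_category Px" and \<sigma>: "\<sigma> permutes {1..l}"
  shows "\<forall>q\<in>Px k l. img (lo \<sigma>) q \<in> Px k l"
  using \<sigma> finite_atLeastAtMost
proof (induction rule: permutes_induct)
  case id
  have "lo (\<lambda>a. a) = (\<lambda>x. x)" by (auto simp: fun_eq_iff lo_def split: pt.splits)
  then show ?case by (simp add: img_def)
next
  case (swap a b p)
  show ?case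
  proof
    fix q assume q: "q \<in> Px k l"
    have "img (lo p) q \<in> Px k l" using swap q by blast
    then have "img (lo (transpose a b)) (img (lo p) q) \<in> Px k l"
      using lo_transp[OF cat _ swap(1,2)] by blast
    then show "img (lo (transpose a b \<circ> p)) q \<in> Px k l" by (simp add: img_comp lo_comp)
  qed
qed



definition Ainv :: "nat \<Rightarrow> pt \<Rightarrow> pt" where
  "Ainv k y = (case y of Lo j \<Rightarrow> if j \<le> k then Up (k + 1 - j) else Lo (j - k) | Up i \<Rightarrow> Up i)"

definition Binv :: "nat \<Rightarrow> pt \<Rightarrow> pt" where
  "Binv l' y = (case y of Lo j \<Rightarrow> Lo (l' + 1 - j) | Up i \<Rightarrow> Lo (i + l'))"

definition unLo :: "pt \<Rightarrow> nat" where
  "unLo y = (case y of Lo j \<Rightarrow> j | Up i \<Rightarrow> 0)"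

lemma invol_img: "invol p = img swap_pt p" by (simp add: invol_def img_def)

lemma pts0: "pts 0 n = Lo ` {1..n}" by (simp add: pts_def)

lemma A_props:
  "x \<in> pts k l \<Longrightarrow> rotp k x \<in> Lo ` {1..k + l}"
  "x \<in> pts k l \<Longrightarrow> Ainv k (rotp k x) = x"
  "y \<in> Lo ` {1..k + l} \<Longrightarrow> Ainv k y \<in> pts k l"
  "y \<in> Lo ` {1..k + l} \<Longrightarrow> rotp k (Ainv k y) = y"
  by (cases x; force simp: Ainv_def)+

lemma B_props:
  "y \<in> Lo ` {1..k' + l'} \<Longrightarrow> rotp l' (swap_pt y) \<in> pts k' l'"
  "y \<in> pts k' l' \<Longrightarrow> Binv l' y \<in> Lo ` {1..k' + l'}"
  "y \<in> pts k' l' \<Longrightarrow> rotp l' (swap_pt (Binv l' y)) = y"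
  by (cases y; force simp: Binv_def)+

lemma relabel:
  assumes cat: "is_category Px" and p: "p \<in> Px k l"
    and f: "bij_betw f (pts k l) (pts k' l')" and n: "k + l = k' + l'"
  shows "img f p \<in> Px k' l'"
proof -
  define N where "N = k + l"
  define h where "h y = Binv l' (f (Ainv k y))" for y
  have hB: "bij_betw h (Lo ` {1..N}) (Lo ` {1..N})"
  proof (rule bij_betw_byWitness[where f' = "\<lambda>y. rotp k (inv_into (pts k l) f (rotp l' (swap_pt y)))"])
    show "\<forall>a\<in>Lo ` {1..N}. rotp k (inv_into (pts k l) f (rotp l' (swap_pt (h a)))) = a"
    proof
      fix a assume a: "a \<in> Lo ` {1..N}"
      have "Ainv k a \<in> pts k l" using A_props(3) a N_def by blast
      then have "f (Ainv k a) \<in> pts k' l'" using f bij_betwE by blast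
      then have "rotp l' (swap_pt (h a)) = f (Ainv k a)" using B_props(3) h_def by simp
      then show "rotp k (inv_into (pts k l) f (rotp l' (swap_pt (h a)))) = a"
        using \<open>Ainv k a \<in> pts k l\<close> f A_props(4) a N_def by (simp add: bij_betw_inv_into_left)
    qed
    show "\<forall>a'\<in>Lo ` {1..N}. h (rotp k (inv_into (pts k l) f (rotp l' (swap_pt a')))) = a'"
    proof
      fix a assume a: "a \<in> Lo ` {1..N}"
      have 1: "rotp l' (swap_pt a) \<in> pts k' l'" using B_props(1) a N_def n by simp
      have 2: "inv_into (pts k l) f (rotp l' (swap_pt a)) \<in> pts k l"
        using 1 f by (metis bij_betw_imp_surj_on inv_into_into)
      have 3: "f (inv_into (pts k l) f (rotp l' (swap_pt a))) = rotp l' (swap_pt a)"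
        using 1 f by (meson bij_betw_inv_into_right)
      have 4: "Binv l' (rotp l' (swap_pt a)) = a" using a by (auto simp: Binv_def)
      show "h (rotp k (inv_into (pts k l) f (rotp l' (swap_pt a)))) = a"
        using 2 3 4 A_props(2) h_def by simp
    qed
    show "h ` Lo ` {1..N} \<subseteq> Lo ` {1..N}"
    proof
      fix y assume "y \<in> h ` Lo ` {1..N}"
      then obtain a where a: "a \<in> Lo ` {1..N}" "y = h a" by blast
      have "Ainv k a \<in> pts k l" using A_props(3) a N_def by blast
      then have "f (Ainv k a) \<in> pts k' l'" using f bij_betwE by blast
      then show "y \<in> Lo ` {1..N}" using B_props(2) a h_def N_def n by simp
    qed
    show "(\<lambda>y. rotp k (inv_into (pts k l) f (rotp l' (swap_pt y)))) ` Lo ` {1..N} \<subseteq> Lo ` {1..N}"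
    proof
      fix y assume "y \<in> (\<lambda>y. rotp k (inv_into (pts k l) f (rotp l' (swap_pt y)))) ` Lo ` {1..N}"
      then obtain a where a: "a \<in> Lo ` {1..N}" "y = rotp k (inv_into (pts k l) f (rotp l' (swap_pt a)))" by blast
      have 1: "rotp l' (swap_pt a) \<in> pts k' l'" using B_props(1) a N_def n by simp
      have 2: "inv_into (pts k l) f (rotp l' (swap_pt a)) \<in> pts k l"
        using 1 f by (metis bij_betw_imp_surj_on inv_into_into)
      show "y \<in> Lo ` {1..N}" using A_props(1)[OF 2] a N_def by simp
    qed
  qed
  define \<sigma> where "\<sigma> j = (if j \<in> {1..N} then unLo (h (Lo j)) else j)" for j
  have hLo: "h (Lo j) = Lo (\<sigma> j)" if "j \<in> {1..N}" for j
  proof -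
    have "h (Lo j) \<in> Lo ` {1..N}" using hB that bij_betwE by blast
    then show ?thesis using that by (auto simp: \<sigma>_def unLo_def)
  qed
  have \<sigma>perm: "\<sigma> permutes {1..N}"
  proof (rule bij_imp_permutes)
    have inj: "inj_on \<sigma> {1..N}"
    proof
      fix i j assume "i \<in> {1..N}" "j \<in> {1..N}" "\<sigma> i = \<sigma> j"
      then have "h (Lo i) = h (Lo j)" using hLo by simp
      then have "Lo i = Lo j" using hB \<open>i \<in> {1..N}\<close> \<open>j \<in> {1..N}\<close>
        by (meson bij_betw_def imageI inj_onD)
      then show "i = j" by simp
    qed
    have sub: "\<sigma> ` {1..N} \<subseteq> {1..N}"
    proof
      fix y assume "y \<in> \<sigma> ` {1..N}"
      then obtain j where j: "j \<in> {1..N}" "y = \<sigma> j" by blast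
      have "h (Lo j) \<in> Lo ` {1..N}" using hB j(1) bij_betwE by blast
      then have "Lo (\<sigma> j) \<in> Lo ` {1..N}" using hLo[OF j(1)] by simp
      then show "y \<in> {1..N}" using j by auto
    qed
    have "\<sigma> ` {1..N} = {1..N}"
      using sub inj by (simp add: card_image card_subset_eq)
    then show "bij_betw \<sigma> {1..N} {1..N}" using inj by (simp add: bij_betw_def)
    show "\<sigma> x = x" if xn: "x \<notin> {1..N}" for x using xn unfolding \<sigma>_def by presburger
  qed
  have p1: "img (rotp k) p \<in> Px 0 N" using rotA[OF cat, where a=k and c=0 and l=l and p=p] p N_def by simp
  have p2: "img (lo \<sigma>) (img (rotp k) p) \<in> Px 0 N" using lo_perm[OF cat \<sigma>perm] p1 by blast
  have p3: "img swap_pt (img (lo \<sigma>) (img (rotp k) p)) \<in> Px (l' + k') 0"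
    using catD(4)[OF cat p2] n N_def by (simp add: invol_img add.commute)
  have p4: "img (rotp l') (img swap_pt (img (lo \<sigma>) (img (rotp k) p))) \<in> Px k' l'"
    using rotA[OF cat p3] by simp
  have e1: "img (rotp l') (img swap_pt (img (lo \<sigma>) (img (rotp k) p))) = img (rotp l' \<circ> swap_pt \<circ> lo \<sigma> \<circ> rotp k) p"
    by (simp add: img_comp comp_assoc)
  have "img (rotp l' \<circ> swap_pt \<circ> lo \<sigma> \<circ> rotp k) p = img f p"
  proof (rule img_cong)
    fix x assume "x \<in> \<Union>p"
    then have x: "x \<in> pts k l" using P_D(1)[OF cat_P[OF cat p]] by simp
    then obtain j where j: "j \<in> {1..N}" "rotp k x = Lo j" using A_props(1) N_def by blast
    have "lo \<sigma> (rotp k x) = h (rotp k x)" using j hLo by simp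
    also have "\<dots> = Binv l' (f x)" using A_props(2)[OF x] h_def by simp
    finally have "rotp l' (swap_pt (lo \<sigma> (rotp k x))) = f x"
      using B_props(3) x f bij_betwE by metis
    then show "(rotp l' \<circ> swap_pt \<circ> lo \<sigma> \<circ> rotp k) x = f x" by simp
  qed
  then show ?thesis using p4 e1 by simp
qed



lemma rot_pt_simps[simp]: "rot_pt k (Up i) = Lo (k + 1 - i)" "rot_pt k (Lo j) = Lo (k + j)"
  by (simp_all add: rot_pt_def)

lemma part1:
  assumes cat: "is_category Px" and p: "p \<in> Px k l"
  shows "bar_part k p \<in> Px 0 (k + l)"
proof -
  have "img (rotp k) p \<in> Px 0 (k + l)" using rotA[OF cat, where a=k and c=0 and l=l and p=p] p by simp
  moreover have "bar_part k p = img (rotp k) p"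
    unfolding bar_part_def img_def[symmetric]
  proof (rule img_cong)
    fix x assume "x \<in> \<Union>p"
    then have "x \<in> pts k l" using P_D(1)[OF cat_P[OF cat p]] by simp
    then show "rot_pt k x = rotp k x" by (cases x) auto
  qed
  ultimately show ?thesis by simp
qed

lemma build:
  assumes cat: "is_category Px" and p: "p \<in> P k l"
    and ob: "\<forall>b\<in>p. one_block (card b) \<in> Px 0 (card b)"
  shows "finite B \<Longrightarrow> B \<subseteq> p \<Longrightarrow> \<exists>n g. img g B \<in> Px 0 n \<and> bij_betw g (\<Union>B) (Lo ` {1..n})"
proof (induction B rule: finite_induct)
  case empty
  have "img id {} \<in> Px 0 0" by (simp add: img_def empty_in[OF cat])
  moreover have "bij_betw id (\<Union>{}) (Lo ` {1..0})" by (simp add: bij_betw_def)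
  ultimately show ?case by (intro exI[of _ 0] exI[of _ id] conjI)
next
  case (insert b B)
  have Bp: "B \<subseteq> p" and bp: "b \<in> p" using insert.prems by auto
  obtain n g where ng: "img g B \<in> Px 0 n" "bij_betw g (\<Union>B) (Lo ` {1..n})"
    using insert.IH[OF Bp] by blast
  define s where "s = card b"
  have fb: "finite b" using finite_subset[OF P_sub[OF p bp] finite_pts] .
  have cs: "card b = card {1..s}" by (simp add: s_def)
  obtain h1 where h1: "bij_betw h1 b {1..s}"
    using finite_same_card_bij[OF fb finite_atLeastAtMost cs] by blast
  have disj: "b \<inter> \<Union>B = {}"
  proof -
    have "b \<inter> c = {}" if "c \<in> B" for c
    proof -
      have "c \<in> p" "c \<noteq> b" using that insert by auto
      then show ?thesis using P_D(2)[OF p] bp by blast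
    qed
    then show ?thesis by blast
  qed
  define g' where "g' x = (if x \<in> b then Lo (h1 x + n) else g x)" for x
  have b1: "bij_betw g' b ((\<lambda>j. Lo (j + n)) ` {1..s})"
  proof -
    have "bij_betw (\<lambda>j. Lo (j + n)) {1..s} ((\<lambda>j. Lo (j + n)) ` {1..s})"
      by (rule inj_on_imp_bij_betw) (auto simp: inj_on_def)
    then have "bij_betw ((\<lambda>j. Lo (j + n)) \<circ> h1) b ((\<lambda>j. Lo (j + n)) ` {1..s})"
      using h1 bij_betw_trans by blast
    then show ?thesis by (rule bij_betw_cong[THEN iffD1, rotated]) (simp add: g'_def)
  qed
  have b2: "bij_betw g' (\<Union>B) (Lo ` {1..n})"
    using ng(2) by (rule bij_betw_cong[THEN iffD1, rotated]) (use disj in \<open>auto simp: g'_def\<close>)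
  have "bij_betw g' (b \<union> \<Union>B) ((\<lambda>j. Lo (j + n)) ` {1..s} \<union> Lo ` {1..n})"
    by (rule bij_betw_combine[OF b1 b2]) auto
  moreover have "(\<lambda>j. Lo (j + n)) ` {1..s} \<union> Lo ` {1..n} = Lo ` {1..n + s}"
  proof (intro equalityI subsetI)
    fix y assume "y \<in> Lo ` {1..n + s}"
    then obtain j where j: "j \<in> {1..n + s}" "y = Lo j" by blast
    show "y \<in> (\<lambda>j. Lo (j + n)) ` {1..s} \<union> Lo ` {1..n}"
    proof (cases "j \<le> n")
      case True then show ?thesis using j by auto
    next
      case False
      then have "j - n \<in> {1..s}" "y = Lo ((j - n) + n)" using j by auto
      then show ?thesis by blast
    qed
  qed auto
  ultimately have bij': "bij_betw g' (\<Union>(insert b B)) (Lo ` {1..n + s})" by simp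
  have "img g' (insert b B) = insert (g' ` b) (img g' B)" by (simp add: img_def)
  moreover have "img g' B = img g B"
    by (rule img_cong) (use disj in \<open>auto simp: g'_def\<close>)
  moreover have "g' ` b = (\<lambda>j. Lo (j + n)) ` {1..s}" using b1 bij_betw_imp_surj_on by blast
  ultimately have "img g' (insert b B) = tensor 0 n (img g B) (one_block s)"
    by (auto simp: tensor_def one_block_def image_image)
  moreover have "tensor 0 n (img g B) (one_block s) \<in> Px 0 (n + s)"
    using catD(2)[OF cat ng(1), of "one_block s" 0 s] ob bp s_def by simp
  ultimately have "img g' (insert b B) \<in> Px 0 (n + s)" by simp
  then show ?case using bij' by (intro exI[of _ "n + s"] exI[of _ g'] conjI)
qed

lemma part3:
  assumes cat: "is_category Px" and p: "p \<in> P k l"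
    and ob: "\<forall>b\<in>p. one_block (card b) \<in> Px 0 (card b)"
  shows "p \<in> Px k l"
proof -
  have fp: "finite p" using finite_elements[OF finite_pts, of k l p] p unfolding P_def by simp
  obtain n g where ng: "img g p \<in> Px 0 n" "bij_betw g (\<Union>p) (Lo ` {1..n})"
    using build[OF cat p ob fp] by blast
  have g: "bij_betw g (pts k l) (Lo ` {1..n})" using ng(2) P_D(1)[OF p] by simp
  have "card (pts k l) = card (Lo ` {1..n})" using bij_betw_same_card[OF g] .
  moreover have "card (Lo ` {1..n}) = n" by (simp add: card_image inj_on_def)
  ultimately have n: "n = k + l" by (simp add: card_pts)
  have f: "bij_betw (inv_into (pts k l) g) (pts 0 n) (pts k l)"
    using bij_betw_inv_into[OF g] by (simp add: pts0)
  have "img (inv_into (pts k l) g) (img g p) \<in> Px k l"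
    by (rule relabel[OF cat ng(1) f]) (simp add: n)
  moreover have "img (inv_into (pts k l) g) (img g p) = p"
  proof -
    have "img (inv_into (pts k l) g \<circ> g) p = img id p"
    proof (rule img_cong)
      fix x assume "x \<in> \<Union>p"
      then have "x \<in> pts k l" using P_D(1)[OF p] by simp
      then show "(inv_into (pts k l) g \<circ> g) x = id x"
        using g by (simp add: bij_betw_inv_into_left)
    qed
    then show ?thesis by (simp add: img_comp img_id)
  qed
  ultimately show ?thesis by simp
qed



lemma pairs_in:
  assumes cat: "is_category Px"
  shows "\<exists>q. q \<in> Px 0 (2 * t)"
proof (induction t)
  case 0 then show ?case using empty_in[OF cat] by auto
next
  case (Suc t)
  then obtain q where "q \<in> Px 0 (2 * t)" by blast
  then have "tensor 0 (2 * t) q pairp \<in> Px (0 + 0) (2 * t + 2)" by (rule catD(2)[OF cat _ catD(7)[OF cat]])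
  then show ?case by (intro exI[of _ "tensor 0 (2 * t) q pairp"]) simp
qed

lemma card_Lo: "card (Lo ` {1..s}) = s" by (simp add: card_image inj_on_def)
lemma card_Up: "card (Up ` {1..s}) = s" by (simp add: card_image inj_on_def)

lemma img_mem: "c \<in> img f p \<Longrightarrow> \<exists>c0\<in>p. c = f ` c0" by (auto simp: img_def)

lemma part2:
  assumes cat: "is_category Px" and p: "p \<in> Px k l" and b: "b \<in> p"
  shows "one_block (card b) \<in> Px 0 (card b) \<or>
         tensor 0 1 singp (one_block (card b)) \<in> Px 0 (card b + 1)"
proof -
  have pP: "p \<in> P k l" using cat_P[OF cat p] .
  define s where "s = card b"
  have bsub: "b \<subseteq> pts k l" using P_sub[OF pP b] .
  have fb: "finite b" using finite_subset[OF bsub finite_pts] .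
  have "{} \<notin> p" using P_D(3)[OF pP] .
  then have bne: "b \<noteq> {}" using b by auto
  have s1: "1 \<le> s" using fb bne s_def by (simp add: Suc_leI card_gt_0_iff)
  have skl: "s \<le> k + l" using card_mono[OF finite_pts bsub] s_def by (simp add: card_pts)
  define R where "R = pts k l - b"
  have fR: "finite R" by (simp add: R_def)
  have cR: "card R = k + l - s" using card_Diff_subset[OF fb bsub] s_def by (simp add: R_def card_pts)
  have ptsU: "pts k l = b \<union> R" using bsub by (auto simp: R_def)
  have cR0: "c \<subseteq> R" if "c \<in> p" "c \<noteq> b" for c
  proof
    fix x assume "x \<in> c"
    then have "x \<in> pts k l" "x \<notin> b" using P_sub[OF pP that(1)] P_D(2)[OF pP that(1) b] that(2) by auto
    then show "x \<in> R" by (simp add: R_def)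
  qed
  define m where "m = k + l - s"
  define t where "t = m div 2"
  have "m = 2 * t \<or> m = 2 * t + 1" unfolding t_def by presburger
  then consider (ev) "m = 2 * t" | (od) "m = 2 * t + 1" by blast
  then show ?thesis
  proof cases
    case ev
    have cb: "card b = card (Lo ` {1..s})" using s_def card_Lo by simp
    have "\<exists>h. bij_betw h b (Lo ` {1..s})" using finite_same_card_bij[OF fb _ cb] by simp
    then obtain f1 where f1: "bij_betw f1 b (Lo ` {1..s})" by blast
    have cR': "card R = card (Up ` {1..m})" using cR m_def card_Up by simp
    have "\<exists>h. bij_betw h R (Up ` {1..m})" using finite_same_card_bij[OF fR _ cR'] by simp
    then obtain f2 where f2: "bij_betw f2 R (Up ` {1..m})" by blast
    define f where "f x = (if x \<in> b then f1 x else f2 x)" for x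
    have bf1: "bij_betw f b (Lo ` {1..s})"
      using f1 by (rule bij_betw_cong[THEN iffD1, rotated]) (simp add: f_def)
    have bf2: "bij_betw f R (Up ` {1..m})"
      using f2 by (rule bij_betw_cong[THEN iffD1, rotated]) (simp add: f_def R_def)
    have "bij_betw f (b \<union> R) (Lo ` {1..s} \<union> Up ` {1..m})"
      by (rule bij_betw_combine[OF bf1 bf2]) auto
    moreover have "Lo ` {1..s} \<union> Up ` {1..m} = pts m s" by (auto simp: pts_def)
    ultimately have bf: "bij_betw f (pts k l) (pts m s)" using ptsU by simp
    have r: "img f p \<in> Px m s" by (rule relabel[OF cat p bf]) (use skl m_def in simp)
    obtain q where q: "q \<in> Px 0 m" using pairs_in[OF cat, of t] ev by blast
    have fbe: "f ` b = Lo ` {1..s}" using bf1 bij_betw_imp_surj_on by blast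
    have fo: "f ` c \<inter> range Lo = {}" if "c \<in> p" "c \<noteq> b" for c
    proof -
      have "f ` c \<subseteq> f ` R" using cR0[OF that] by blast
      also have "\<dots> = Up ` {1..m}" using bf2 bij_betw_imp_surj_on by blast
      finally show ?thesis by auto
    qed
    have cond: "c \<subseteq> range Lo \<or> c \<inter> range Lo \<subseteq> {Lo 1}" if cin: "c \<in> img f p" for c
    proof -
      obtain c0 where c0: "c0 \<in> p" "c = f ` c0" using img_mem[OF cin] by blast
      show ?thesis
      proof (cases "c0 = b")
        case True then show ?thesis using c0 fbe by auto
      next
        case False then show ?thesis using fo[OF c0(1) False] c0 by auto
      qed
    qed
    have I: "{c \<in> img f p. c \<inter> range Lo \<noteq> {}} = {Lo ` {1..s}}"
    proof (intro equalityI subsetI)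
      fix c assume c: "c \<in> {c \<in> img f p. c \<inter> range Lo \<noteq> {}}"
      then obtain c0 where c0: "c0 \<in> p" "c = f ` c0" using img_mem by blast
      have "c0 = b" using fo[OF c0(1)] c c0(2) by blast
      then show "c \<in> {Lo ` {1..s}}" using c0 fbe by simp
    next
      fix c assume "c \<in> {Lo ` {1..s}}"
      then have "c = f ` b" using fbe by simp
      moreover have "f ` b \<in> img f p" using b by (simp add: img_def)
      moreover have "Lo 1 \<in> f ` b" using fbe s1 by simp
      ultimately show "c \<in> {c \<in> img f p. c \<inter> range Lo \<noteq> {}}" by blast
    qed
    have "comp (img f p) q = {Lo ` {1..s}}"
      using compK[OF cat_P[OF cat r] cat_P[OF cat q] cond] I by auto
    moreover have "comp (img f p) q \<in> Px 0 s" using catD(3)[OF cat r q] .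
    ultimately have "one_block s \<in> Px 0 s" by (simp add: one_block_def)
    then show ?thesis using s_def by simp
  next
    case od
    have "card R \<noteq> 0" using cR m_def od by simp
    then have "R \<noteq> {}" by auto
    then obtain x0 where x0: "x0 \<in> R" by blast
    define R' where "R' = R - {x0}"
    have fR': "finite R'" using fR by (simp add: R'_def)
    define L2 where "L2 = (\<lambda>j. Lo (j + 1)) ` {1..s}"
    have cL2: "card L2 = s" unfolding L2_def by (simp add: card_image inj_on_def)
    have cb: "card b = card L2" using s_def cL2 by simp
    have "\<exists>h. bij_betw h b L2" using finite_same_card_bij[OF fb _ cb] L2_def by simp
    then obtain f1 where f1: "bij_betw f1 b L2" by blast
    have cR': "card R' = card (Up ` {1..2 * t})"
      using cR m_def od card_Up x0 fR by (simp add: R'_def)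
    have "\<exists>h. bij_betw h R' (Up ` {1..2 * t})" using finite_same_card_bij[OF fR' _ cR'] by simp
    then obtain f2 where f2: "bij_betw f2 R' (Up ` {1..2 * t})" by blast
    define f where "f x = (if x \<in> b then f1 x else if x = x0 then Lo 1 else f2 x)" for x
    have x0b: "x0 \<notin> b" using x0 by (simp add: R_def)
    have bf1: "bij_betw f b L2"
      using f1 by (rule bij_betw_cong[THEN iffD1, rotated]) (simp add: f_def)
    have bf2: "bij_betw f R' (Up ` {1..2 * t})"
      using f2 by (rule bij_betw_cong[THEN iffD1, rotated]) (simp add: f_def R_def R'_def)
    have bf3: "bij_betw f {x0} {Lo 1}" using x0b by (simp add: f_def bij_betw_def)
    have "bij_betw f ({x0} \<union> R') ({Lo 1} \<union> Up ` {1..2 * t})"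
      by (rule bij_betw_combine[OF bf3 bf2]) auto
    then have bij0: "bij_betw f (b \<union> ({x0} \<union> R')) (L2 \<union> ({Lo 1} \<union> Up ` {1..2 * t}))"
      by (rule bij_betw_combine[OF bf1]) (auto simp: L2_def)
    have E1: "b \<union> ({x0} \<union> R') = pts k l" using ptsU x0 by (auto simp: R'_def)
    have E2: "L2 \<union> ({Lo 1} \<union> Up ` {1..2 * t}) = pts (2 * t) (s + 1)"
    proof (intro equalityI subsetI)
      fix y assume "y \<in> pts (2 * t) (s + 1)"
      then consider i where "i \<in> {1..2 * t}" "y = Up i" | j where "j \<in> {1..s + 1}" "y = Lo j"
        unfolding pts_def by blast
      then show "y \<in> L2 \<union> ({Lo 1} \<union> Up ` {1..2 * t})"
      proof cases
        case 1 then show ?thesis by blast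
      next
        case 2
        show ?thesis
        proof (cases "j = 1")
          case True then show ?thesis using 2 by simp
        next
          case False
          then have "j - 1 \<in> {1..s}" "y = Lo ((j - 1) + 1)" using 2 by auto
          then show ?thesis unfolding L2_def by blast
        qed
      qed
    qed (auto simp: L2_def pts_def)
    have bf: "bij_betw f (pts k l) (pts (2 * t) (s + 1))" using bij0 unfolding E1 E2 .
    have r: "img f p \<in> Px (2 * t) (s + 1)" by (rule relabel[OF cat p bf]) (use skl m_def od in linarith)
    obtain q where q: "q \<in> Px 0 (2 * t)" using pairs_in[OF cat, of t] by blast
    have fbe: "f ` b = L2" using bf1 bij_betw_imp_surj_on by blast
    have L2Lo: "L2 \<subseteq> range Lo" by (auto simp: L2_def)
    have fo: "f ` c \<inter> range Lo \<subseteq> {Lo 1}" if "c \<in> p" "c \<noteq> b" for c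
    proof
      fix y assume y: "y \<in> f ` c \<inter> range Lo"
      then obtain x where x: "x \<in> c" "y = f x" by blast
      have "x \<in> R" using cR0[OF that] x by blast
      show "y \<in> {Lo 1}"
      proof (cases "x = x0")
        case True then show ?thesis using x x0b by (simp add: f_def)
      next
        case False
        then have "x \<in> R'" using \<open>x \<in> R\<close> by (simp add: R'_def)
        then have "f x \<in> Up ` {1..2 * t}" using bf2 bij_betwE by blast
        then show ?thesis using x y by auto
      qed
    qed
    have cond: "c \<subseteq> range Lo \<or> c \<inter> range Lo \<subseteq> {Lo 1}" if cin: "c \<in> img f p" for c
    proof -
      obtain c0 where c0: "c0 \<in> p" "c = f ` c0" using img_mem[OF cin] by blast
      show ?thesis
      proof (cases "c0 = b")
        case True then show ?thesis using c0 fbe L2Lo by auto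
      next
        case False then show ?thesis using fo[OF c0(1) False] c0 by auto
      qed
    qed
    have val: "(if c \<subseteq> range Lo then c else {Lo 1}) = {Lo 1}"
      if "c0 \<in> p" "c0 \<noteq> b" "c = f ` c0" "c \<inter> range Lo \<noteq> {}" for c c0
    proof -
      have "c \<inter> range Lo \<subseteq> {Lo 1}" using fo[OF that(1,2)] that(3) by simp
      then have "c \<inter> range Lo = {Lo 1}" using subset_singletonD that(4) by blast
      then show ?thesis by auto
    qed
    have eq: "(\<lambda>c. if c \<subseteq> range Lo then c else {Lo 1}) ` {c \<in> img f p. c \<inter> range Lo \<noteq> {}} = {L2, {Lo 1}}"
    proof (intro equalityI subsetI)
      fix y assume "y \<in> (\<lambda>c. if c \<subseteq> range Lo then c else {Lo 1}) ` {c \<in> img f p. c \<inter> range Lo \<noteq> {}}"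
      then obtain c where c: "c \<in> img f p" "c \<inter> range Lo \<noteq> {}" "y = (if c \<subseteq> range Lo then c else {Lo 1})"
        by blast
      obtain c0 where c0: "c0 \<in> p" "c = f ` c0" using img_mem[OF c(1)] by blast
      show "y \<in> {L2, {Lo 1}}"
      proof (cases "c0 = b")
        case True then show ?thesis using c c0 fbe L2Lo by simp
      next
        case False then show ?thesis using val[OF c0(1) False c0(2) c(2)] c(3) by simp
      qed
    next
      fix y assume "y \<in> {L2, {Lo 1}}"
      then consider "y = L2" | "y = {Lo 1}" by blast
      then show "y \<in> (\<lambda>c. if c \<subseteq> range Lo then c else {Lo 1}) ` {c \<in> img f p. c \<inter> range Lo \<noteq> {}}"
      proof cases
        case 1
        have "f ` b \<in> img f p" using b by (simp add: img_def)
        moreover have "Lo 2 \<in> f ` b" using fbe s1 unfolding L2_def by force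
        ultimately have "f ` b \<in> {c \<in> img f p. c \<inter> range Lo \<noteq> {}}" by blast
        moreover have "(if f ` b \<subseteq> range Lo then f ` b else {Lo 1}) = y" using 1 fbe L2Lo by simp
        ultimately show ?thesis by (rule rev_image_eqI[OF _ sym])
      next
        case 2
        have "x0 \<in> pts k l" using x0 by (simp add: R_def)
        then obtain c0 where c0: "c0 \<in> p" "x0 \<in> c0" using P_cover[OF pP] by blast
        have c0b: "c0 \<noteq> b" using c0 x0b by blast
        have "Lo 1 \<in> f ` c0" using c0 x0b by (force simp: f_def)
        then have in1: "f ` c0 \<inter> range Lo \<noteq> {}" by blast
        have "f ` c0 \<in> img f p" using c0 by (simp add: img_def)
        then have "f ` c0 \<in> {c \<in> img f p. c \<inter> range Lo \<noteq> {}}" using in1 by blast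
        moreover have "(if f ` c0 \<subseteq> range Lo then f ` c0 else {Lo 1}) = y"
          using val[OF c0(1) c0b refl in1] 2 by simp
        ultimately show ?thesis by (rule rev_image_eqI[OF _ sym])
      qed
    qed
    have "comp (img f p) q = {L2, {Lo 1}}"
      using compK[OF cat_P[OF cat r] cat_P[OF cat q] cond] eq by simp
    moreover have "comp (img f p) q \<in> Px 0 (s + 1)" using catD(3)[OF cat r q] .
    moreover have "tensor 0 1 singp (one_block s) = {L2, {Lo 1}}"
      by (auto simp: tensor_def singp_def one_block_def L2_def image_image)
    ultimately have "tensor 0 1 singp (one_block s) \<in> Px 0 (s + 1)" by simp
    then show ?thesis using s_def by simp
  qed
qed

theorem lemma2p7:
  assumes "is_category Px"
  shows "(\<forall>k l p. p \<in> Px k l \<longrightarrow> bar_part k p \<in> Px 0 (k + l))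
       \<and> (\<forall>k l p b. p \<in> Px k l \<longrightarrow> b \<in> p \<longrightarrow>
            one_block (card b) \<in> Px 0 (card b) \<or>
            tensor 0 1 singp (one_block (card b)) \<in> Px 0 (card b + 1))
       \<and> (\<forall>k l p. p \<in> P k l \<longrightarrow> (\<forall>b\<in>p. one_block (card b) \<in> Px 0 (card b))
            \<longrightarrow> p \<in> Px k l)"
proof (intro conjI allI impI)
  fix k l p assume "p \<in> Px k l"
  then show "bar_part k p \<in> Px 0 (k + l)" by (rule part1[OF assms])
next
  fix k l p b assume "p \<in> Px k l" "b \<in> p"
  then show "one_block (card b) \<in> Px 0 (card b) \<or>
            tensor 0 1 singp (one_block (card b)) \<in> Px 0 (card b + 1)" by (rule part2[OF assms])
next
  fix k l p assume "p \<in> P k l" "\<forall>b\<in>p. one_block (card b) \<in> Px 0 (card b)"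
  then show "p \<in> Px k l" by (rule part3[OF assms])
qed


end
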